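(* Let $K\ge2$, let the ground-truth clusters $\mathcal{C}_1,\dots,\mathcal{C}_K$ have size $N/K$ each, let $\mathcal{R}$ satisfy Assumption 1, and let $1\ge p\ge q\ge r\ge s\ge0$. Define $\tilde{\mathcal{A}}\in\mathbb{R}^{N\times N}$ by $\tilde{\mathcal{A}}_{ii}=p$ and, for $i\neq j$, $\tilde{\mathcal{A}}_{ij}=p$ if $\pi(v_i)=\pi(v_j)$, $R_{ij}=1$; $q$ if $\pi(v_i)\neq\pi(v_j)$, $R_{ij}=1$; $r$ if $\pi(v_i)=\pi(v_j)$, $R_{ij}=0$; $s$ if $\pi(v_i)\neq\pi(v_j)$, $R_{ij}=0$. With $\mathbf{u}_1,\dots,\mathbf{u}_{K-1}$ defined by $u_{ki}=1$ if $v_i\in\mathcal{C}_k$ and $u_{ki}=-\frac1{K-1}$ otherwise, we have $$\tilde{\mathcal{A}}\mathbf{1}=\lambda_1\mathbf{1},\quad \lambda_1=qd+s(N-d)+(p-q)\frac dK+(r-s)\frac{N-d}K,$$ and, for each $k\in[K-1]$, $\tilde{\mathcal{A}}\mathbf{u}_k=\lambda_{1+k}\mathbf{u}_k$ with $\lambda_{1+k}=(p-q)\frac dK+(r-s)\frac{N-d}K$.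
   Context: $\mathcal{V}=\{v_1,\dots,v_N\}$, $\pi:\mathcal{V}\to[K]$ with $\mathcal{C}_k=\{v_i:\pi(v_i)=k\}$. $\mathcal{R}$ is an undirected graph on $\mathcal{V}$ with symmetric adjacency $\mathbf{R}\in\{0,1\}^{N\times N}$. Assumption 1: $\mathcal{R}$ is $d$-regular for some $K\le d\le N$, $R_{ii}=1$ for all $i$ (self-loops counted in the degree), and each node is adjacent in $\mathcal{R}$ to exactly $d/K$ nodes of $\mathcal{C}_k$ for every $k\in[K]$ (including the self-loop). $\mathbf{1}$ is the all-ones vector. (The matrix $\tilde{\mathcal{A}}$ equals $\mathbb{E}[\mathbf{A}]+p\mathbf{I}$ for $\mathbf{A}$ drawn from the representation-aware SBM with these parameters.) *)

theory Defs
  imports Complex_Main "HOL-Library.Multiset"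
begin

text \<open>Nodes are v_0,...,v_(N-1), indexed by i < N. The cluster assignment
 cl maps nodes to [K] = {1..K}. The graph R is given by a boolean adjacency relation.\<close>

definition Atilde :: "(nat \<Rightarrow> nat) \<Rightarrow> (nat \<Rightarrow> nat \<Rightarrow> bool) \<Rightarrow> real \<Rightarrow> real \<Rightarrow> real \<Rightarrow> real
    \<Rightarrow> nat \<Rightarrow> nat \<Rightarrow> real" where
  "Atilde cl R p q r s i j =
     (if i = j then p
      else if cl i = cl j \<and> R i j then p
      else if cl i \<noteq> cl j \<and> R i j then q
      else if cl i = cl j \<and> \<not> R i j then r
      else s)"

definition mat_vec :: "nat \<Rightarrow> (nat \<Rightarrow> nat \<Rightarrow> real) \<Rightarrow> (nat \<Rightarrow> real) \<Rightarrow> nat \<Rightarrow> real" where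
  "mat_vec N A x i = (\<Sum>j<N. A i j * x j)"

definition u_vec :: "nat \<Rightarrow> (nat \<Rightarrow> nat) \<Rightarrow> nat \<Rightarrow> nat \<Rightarrow> real" where
  "u_vec K cl k i = (if cl i = k then 1 else - 1 / (real K - 1))"

end

theory Submission
  imports Defs
begin

definition ind :: "bool \<Rightarrow> real" where "ind b = (if b then 1 else 0)"

lemma sum_ind: "(\<Sum>j<(N::nat). ind (P j) * (a * ind (Q j) + b))
   = a * real (card {j. j < N \<and> P j \<and> Q j}) + b * real (card {j. j < N \<and> P j})"
proof -
  have c: "\<And>S. (\<Sum>j<N. ind (S j)) = real (card {j. j < N \<and> S j})"
  proof -
    fix S
    have "(\<Sum>j<N. ind (S j)) = (\<Sum>j\<in>{j. j < N \<and> S j}. 1)"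
      unfolding ind_def by (rule sum.mono_neutral_cong_right) auto
    then show "(\<Sum>j<N. ind (S j)) = real (card {j. j < N \<and> S j})" by simp
  qed
  have "(\<Sum>j<N. ind (P j) * (a * ind (Q j) + b)) = a * (\<Sum>j<N. ind (P j \<and> Q j)) + b * (\<Sum>j<N. ind (P j))"
    by (auto simp: sum.distrib sum_distrib_left ind_def algebra_simps intro!: sum.cong)
  then show ?thesis using c[of "\<lambda>j. P j \<and> Q j"] c[of P] by simp
qed

lemma sum_ind1: "(\<Sum>j<(N::nat). (a * ind (Q j) + b))
   = a * real (card {j. j < N \<and> Q j}) + b * real N"
  using sum_ind[where N=N and P="\<lambda>_. True" and a=a and Q=Q and b=b] by (simp add: ind_def)

theorem lemma4:
  fixes N K d :: nat and cl :: "nat \<Rightarrow> nat" and R :: "nat \<Rightarrow> nat \<Rightarrow> bool"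
    and p q r s :: real
  assumes K2: "K \<ge> 2"
    and pi_range: "\<forall>i<N. cl i \<in> {1..K}"
    and cluster_size: "\<forall>k\<in>{1..K}. real (card {i. i < N \<and> cl i = k}) = real N / real K"
    and R_sym: "\<forall>i<N. \<forall>j<N. R i j = R j i"
    and R_refl: "\<forall>i<N. R i i"
    and Kd: "K \<le> d" and dN: "d \<le> N"
    and R_reg: "\<forall>i<N. card {j. j < N \<and> R i j} = d"
    and R_bal: "\<forall>i<N. \<forall>k\<in>{1..K}. real (card {j. j < N \<and> R i j \<and> cl j = k}) = real d / real K"
    and prob: "1 \<ge> p" "p \<ge> q" "q \<ge> r" "r \<ge> s" "s \<ge> 0"
  shows "(\<forall>i<N. mat_vec N (Atilde cl R p q r s) (\<lambda>_. 1) i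
            = (q * d + s * (real N - d) + (p - q) * d / K + (r - s) * (real N - d) / K) * 1)
       \<and> (\<forall>k\<in>{1..K-1}. \<forall>i<N. mat_vec N (Atilde cl R p q r s) (u_vec K cl k) i
            = ((p - q) * d / K + (r - s) * (real N - d) / K) * u_vec K cl k i)"
proof -
  have gen: "mat_vec N (Atilde cl R p q r s) (\<lambda>j. a * ind (cl j = k) + b) i =
      s * (a * real (card {j. j < N \<and> cl j = k}) + b * real N)
    + (q - s) * (a * real (card {j. j < N \<and> R i j \<and> cl j = k}) + b * real (card {j. j < N \<and> R i j}))
    + (r - s) * (a * real (card {j. j < N \<and> cl j = cl i \<and> cl j = k}) + b * real (card {j. j < N \<and> cl j = cl i}))
    + (p - q - r + s) * (a * real (card {j. j < N \<and> (R i j \<and> cl j = cl i) \<and> cl j = k})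
         + b * real (card {j. j < N \<and> R i j \<and> cl j = cl i}))"
    if i: "i < N" for a b k i
  proof -
    have A: "Atilde cl R p q r s i j = s + (q - s) * ind (R i j) + (r - s) * ind (cl j = cl i)
        + (p - q - r + s) * ind (R i j \<and> cl j = cl i)" if "j < N" for j
      using R_refl i unfolding Atilde_def ind_def by (cases "i = j") (auto simp: algebra_simps)
    have "mat_vec N (Atilde cl R p q r s) (\<lambda>j. a * ind (cl j = k) + b) i
       = (\<Sum>j<N. (s * (a * ind (cl j = k) + b) + (q - s) * (ind (R i j) * (a * ind (cl j = k) + b)))
           + (r - s) * (ind (cl j = cl i) * (a * ind (cl j = k) + b))
           + (p - q - r + s) * (ind (R i j \<and> cl j = cl i) * (a * ind (cl j = k) + b)))"
      unfolding mat_vec_def by (rule sum.cong) (auto simp: A algebra_simps)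
    also have "\<dots> = s * (\<Sum>j<N. a * ind (cl j = k) + b)
       + (q - s) * (\<Sum>j<N. ind (R i j) * (a * ind (cl j = k) + b))
       + (r - s) * (\<Sum>j<N. ind (cl j = cl i) * (a * ind (cl j = k) + b))
       + (p - q - r + s) * (\<Sum>j<N. ind (R i j \<and> cl j = cl i) * (a * ind (cl j = k) + b))"
      unfolding sum_distrib_left by (simp only: sum.distrib)
    finally show ?thesis by (simp only: sum_ind sum_ind1)
  qed
  have Kpos: "real K > 0" "real K - 1 > 0" using K2 by auto
  show ?thesis
  proof (intro conjI allI impI ballI)
    fix i assume i: "i < N"
    have ci: "cl i \<in> {1..K}" using pi_range i by auto
    have "(\<lambda>_. 1::real) = (\<lambda>j. 0 * ind (cl j = 1) + 1)" by simp
    then have "mat_vec N (Atilde cl R p q r s) (\<lambda>_. 1) i = 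
      s * real N + (q - s) * d + (r - s) * (real N / K) + (p - q - r + s) * (real d / K)"
      using gen[OF i, of 0 1 1] R_reg i cluster_size ci R_bal by (simp add: conj_commute)
    then show "mat_vec N (Atilde cl R p q r s) (\<lambda>_. 1) i
            = (q * d + s * (real N - d) + (p - q) * d / K + (r - s) * (real N - d) / K) * 1"
      using Kpos by (simp add: field_simps)
  next
    fix k i assume k: "k \<in> {1..K-1}" and i: "i < N"
    have ci: "cl i \<in> {1..K}" using pi_range i by auto
    have kK: "k \<in> {1..K}" using k by auto
    define a where "a = 1 + 1 / (real K - 1)"
    define b where "b = - 1 / (real K - 1)"
    have u: "u_vec K cl k = (\<lambda>j. a * ind (cl j = k) + b)"
      unfolding u_vec_def a_def b_def ind_def by (auto simp: fun_eq_iff)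
    have e1: "{j. j < N \<and> cl j = cl i \<and> cl j = k} = (if cl i = k then {j. j < N \<and> cl j = k} else {})"
      by auto
    have e2: "{j. j < N \<and> (R i j \<and> cl j = cl i) \<and> cl j = k} = (if cl i = k then {j. j < N \<and> R i j \<and> cl j = k} else {})"
      by auto
    have M: "mat_vec N (Atilde cl R p q r s) (u_vec K cl k) i =
      s * (a * (real N / K) + b * real N)
    + (q - s) * (a * (real d / K) + b * real d)
    + (r - s) * (a * (if cl i = k then real N / K else 0) + b * (real N / K))
    + (p - q - r + s) * (a * (if cl i = k then real d / K else 0) + b * (real d / K))"
      unfolding u gen[OF i] e1 e2 using R_reg i cluster_size ci kK R_bal
      by (simp add: conj_commute)
    have ab1: "a / real K + b = 0" unfolding a_def b_def using Kpos by (simp add: field_simps)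
    have ab2: "a + b = 1" unfolding a_def b_def by simp
    show "mat_vec N (Atilde cl R p q r s) (u_vec K cl k) i
            = ((p - q) * d / K + (r - s) * (real N - d) / K) * u_vec K cl k i"
    proof (cases "cl i = k")
      case True
      have "mat_vec N (Atilde cl R p q r s) (u_vec K cl k) i
         = s * N * (a / real K + b) + (q - s) * d * (a / real K + b)
           + (r - s) * (N / K) * (a + b) + (p - q - r + s) * (d / K) * (a + b)"
        unfolding M using True Kpos by (simp add: field_simps)
      also have "\<dots> = (r - s) * (N / K) + (p - q - r + s) * (d / K)" using ab1 ab2 by simp
      finally show ?thesis using True Kpos by (simp add: u_vec_def field_simps)
    next
      case False
      have "mat_vec N (Atilde cl R p q r s) (u_vec K cl k) i
         = s * N * (a / real K + b) + (q - s) * d * (a / real K + b)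
           + b * ((r - s) * (N / K) + (p - q - r + s) * (d / K))"
        unfolding M using False Kpos by (simp add: field_simps)
      also have "\<dots> = b * ((r - s) * (N / K) + (p - q - r + s) * (d / K))" using ab1 by simp
      finally show ?thesis using False Kpos unfolding u_vec_def b_def by (simp add: field_simps)
    qed
  qed
qed

end
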